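(* Let $G$ be a graph on $V$ and $W\subseteq V$ nonempty. Then $W$ is minimally reducible in $G$ if and only if $W$ is the domain of a combinatorial reduction rule applicable to $G$, i.e. either $W=\{v\}$ where $v$ has a loop, or $W=\{v_1,v_2\}$ where $v_1,v_2$ are adjacent loopless vertices, or $W=\{v\}$ where $v$ is loopless and has no neighbors. Consequently the minimal graph reductions of $G$ are exactly the applicable rules $\mathrm{gpr}_v$, $\mathrm{gdr}_{v_1,v_2}$, $\mathrm{gnr}_v$.
   Context: A graph means a finite simple graph in which loops are allowed, with adjacency matrix $A$ over $\mathbf F_2$ ($A_{vv}=1$ iff $v$ has a loop). Let $\mathcal V$ be the $\mathbf F_2$-vector space with basis $V$ and $\mathcal E(x,y)=x^TAy$. For $W\subseteq V$, $\langle W\rangle$ is the span and $\langle W\rangle^{\perp\mathcal E}=\{x:\mathcal E(x,w)=0\ \forall w\in\langle W\rangle\}$. $W$ is reducible in $G$ if $\langle W\rangle+\langle W\rangle^{\perp\mathcal E}=\mathcal V$. A nonempty $W$ is minimally reducible if it is reducible and no nonempty proper subset of it is reducible. The combinatorial reduction rules (with domain ordered first, $R$ the principal submatrix on the other vertices): $\mathrm{gpr}_v$ applies iff $v$ has a loop, $\begin{pmatrix}1&Q\\Q^T&R\end{pmatrix}\mapsto R-Q^TQ$; $\mathrm{gdr}_{v_1,v_2}$ applies iff $v_1,v_2$ are loopless and adjacent, $\begin{pmatrix}J&Q\\Q^T&R\end{pmatrix}\mapsto R-Q^TJQ$, $J=\begin{pmatrix}0&1\\1&0\end{pmatrix}$;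 $\mathrm{gnr}_v$ applies iff $v$ is loopless with no neighbors, $\begin{pmatrix}0&\mathbf 0\\ \mathbf 0^T&R\end{pmatrix}\mapsto R$. *)

theory Defs
  imports Main
begin

(* Vectors of the F_2-space with basis V are encoded as subsets x of V
   (x = support of the coordinate vector); vector addition is symmetric difference. *)

definition graph :: "'a set \<Rightarrow> ('a \<Rightarrow> 'a \<Rightarrow> bool) \<Rightarrow> bool" where
  "graph V A \<longleftrightarrow> finite V \<and> (\<forall>u v. A u v \<longrightarrow> A v u) \<and> (\<forall>u v. A u v \<longrightarrow> u \<in> V \<and> v \<in> V)"

definition vadd :: "'a set \<Rightarrow> 'a set \<Rightarrow> 'a set" where
  "vadd x y = (x - y) \<union> (y - x)"

(* bilinear form E(x,y) = x^T A y over F_2 (True = 1) *)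
definition bform :: "('a \<Rightarrow> 'a \<Rightarrow> bool) \<Rightarrow> 'a set \<Rightarrow> 'a set \<Rightarrow> bool" where
  "bform A x y \<longleftrightarrow> odd (card {(u, v). u \<in> x \<and> v \<in> y \<and> A u v})"

inductive_set span2 :: "'a set \<Rightarrow> 'a set set" for W :: "'a set" where
  zero: "{} \<in> span2 W"
| add: "x \<in> span2 W \<Longrightarrow> w \<in> W \<Longrightarrow> vadd x {w} \<in> span2 W"

definition perpE :: "'a set \<Rightarrow> ('a \<Rightarrow> 'a \<Rightarrow> bool) \<Rightarrow> 'a set \<Rightarrow> 'a set set" where
  "perpE V A W = {x. x \<subseteq> V \<and> (\<forall>w \<in> span2 W. \<not> bform A x w)}"

definition reducible :: "'a set \<Rightarrow> ('a \<Rightarrow> 'a \<Rightarrow> bool) \<Rightarrow> 'a set \<Rightarrow> bool" where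
  "reducible V A W \<longleftrightarrow>
     {vadd a b | a b. a \<in> span2 W \<and> b \<in> perpE V A W} = Pow V"

definition minimally_reducible :: "'a set \<Rightarrow> ('a \<Rightarrow> 'a \<Rightarrow> bool) \<Rightarrow> 'a set \<Rightarrow> bool" where
  "minimally_reducible V A W \<longleftrightarrow> W \<noteq> {} \<and> reducible V A W \<and>
     (\<forall>W'. W' \<subset> W \<and> W' \<noteq> {} \<longrightarrow> \<not> reducible V A W')"

end

theory Submission
  imports Defs
begin

lemma span_sub: "x \<in> span2 W \<Longrightarrow> x \<subseteq> W"
  by (induction rule: span2.induct) (auto simp: vadd_def)

lemma span_single: "w \<in> W \<Longrightarrow> {w} \<in> span2 W"
  using span2.add[OF span2.zero, of w] by (simp add: vadd_def)

lemma bform_single: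
  "bform A x {w} \<longleftrightarrow> odd (card {p. p \<in> x \<and> A p w})"
proof -
  have "{(u, v). u \<in> x \<and> v \<in> {w} \<and> A u v} = (\<lambda>p. (p, w)) ` {p. p \<in> x \<and> A p w}"
    by auto
  moreover have "inj_on (\<lambda>p. (p, w)) {p. p \<in> x \<and> A p w}" by (auto simp: inj_on_def)
  ultimately show ?thesis unfolding bform_def by (simp add: card_image)
qed

lemma bform_empty: "\<not> bform A x {}"
  unfolding bform_def by simp

lemma fin_N: "graph V A \<Longrightarrow> finite {p. p \<in> x \<and> A p w}"
  unfolding graph_def by (metis (mono_tags, lifting) mem_Collect_eq rev_finite_subset subsetI)

lemma flip:
  assumes g: "graph V A"
  shows "bform A (vadd x {u}) {w} \<longleftrightarrow> (bform A x {w} \<noteq> A u w)"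
proof -
  let ?N = "{p. p \<in> x \<and> A p w}"
  let ?M = "{p. p \<in> vadd x {u} \<and> A p w}"
  have f: "finite ?N" using fin_N[OF g] .
  show ?thesis
  proof (cases "A u w")
    case True
    show ?thesis
    proof (cases "u \<in> x")
      case True
      have "?M = ?N - {u}" using True by (auto simp: vadd_def)
      moreover have "u \<in> ?N" using True \<open>A u w\<close> by auto
      ultimately have "card ?M + 1 = card ?N" using f
        by (metis card_Diff1_less card_Suc_Diff1 Suc_eq_plus1)
      then show ?thesis using \<open>A u w\<close> by (simp add: bform_single) presburger
    next
      case False
      have "?M = insert u ?N" using False \<open>A u w\<close> by (auto simp: vadd_def)
      moreover have "u \<notin> ?N" using False by auto
      ultimately have "card ?M = card ?N + 1" using f by simp
      then show ?thesis using \<open>A u w\<close> by (simp add: bform_single)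
    qed
  next
    case False
    have "?M = ?N" using False by (auto simp: vadd_def)
    then show ?thesis using False by (simp add: bform_single)
  qed
qed

lemma vadd_cancel: "vadd a (vadd a x) = x"
  by (auto simp: vadd_def)

lemma L5:
  assumes g: "graph V A" and r: "reducible V A W" and z: "\<forall>p\<in>W. \<forall>q\<in>W. \<not> A p q"
    and w: "w \<in> W" and u: "u \<in> V"
  shows "\<not> A w u"
proof
  assume awu: "A w u"
  have "{u} \<in> {vadd a b | a b. a \<in> span2 W \<and> b \<in> perpE V A W}"
    using u r unfolding reducible_def by simp
  then obtain a b where e: "{u} = vadd a b" and a: "a \<in> span2 W" and b: "b \<in> perpE V A W"
    by blast
  have aW: "a \<subseteq> W" using span_sub[OF a] .
  have nb: "\<not> bform A b {w}" using b span_single[OF w] unfolding perpE_def by auto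
  have be: "b = vadd a {u}" using e vadd_cancel by metis
  have auw: "A u w" using awu g unfolding graph_def by auto
  have N0: "{p. p \<in> a \<and> A p w} = {}" using aW z w by auto
  have "\<not> bform A a {w}" by (simp only: bform_single N0) simp
  then have "bform A b {w}" using flip[OF g, of a u w] be auw by simp
  then show False using nb by simp
qed

lemma pow1: "Pow {v} = {{}, {v}}" by auto
lemma pow2: "Pow {v1, v2} = {{}, {v1}, {v2}, {v1, v2}}" by (auto simp: Pow_def)

lemma bform_pair:
  assumes g: "graph V A" and ne: "v1 \<noteq> v2"
  shows "bform A x {v1, v2} \<longleftrightarrow> (bform A x {v1} \<noteq> bform A x {v2})"
proof -
  let ?S = "\<lambda>w. {(p, q). p \<in> x \<and> q \<in> {w} \<and> A p q}"
  have fin: "finite (?S w)" for w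
  proof -
    have "?S w \<subseteq> V \<times> V" using g unfolding graph_def by auto
    then show ?thesis using g unfolding graph_def by (meson finite_SigmaI rev_finite_subset)
  qed
  have "{(p, q). p \<in> x \<and> q \<in> {v1, v2} \<and> A p q} = ?S v1 \<union> ?S v2" by auto
  moreover have "?S v1 \<inter> ?S v2 = {}" using ne by auto
  ultimately have "card {(p, q). p \<in> x \<and> q \<in> {v1, v2} \<and> A p q} = card (?S v1) + card (?S v2)"
    using fin by (simp add: card_Un_disjoint)
  then show ?thesis unfolding bform_def by simp
qed

lemma vadd_comm: "vadd a b = vadd b a" by (auto simp: vadd_def)

lemma red_intro:
  assumes WV: "W \<subseteq> V"
    and h: "\<And>x. x \<subseteq> V \<Longrightarrow> \<exists>a. a \<in> span2 W \<and> vadd a x \<in> perpE V A W"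
  shows "reducible V A W"
  unfolding reducible_def
proof (intro equalityI subsetI)
  fix y assume "y \<in> {vadd a b |a b. a \<in> span2 W \<and> b \<in> perpE V A W}"
  then obtain a b where "y = vadd a b" "a \<in> span2 W" "b \<in> perpE V A W" by blast
  moreover have "a \<subseteq> V" using span_sub[OF \<open>a \<in> span2 W\<close>] WV by blast
  ultimately show "y \<in> Pow V" unfolding perpE_def vadd_def by auto
next
  fix x assume "x \<in> Pow V"
  then obtain a where "a \<in> span2 W" "vadd a x \<in> perpE V A W" using h by blast
  then show "x \<in> {vadd a b |a b. a \<in> span2 W \<and> b \<in> perpE V A W}"
    using vadd_cancel[of a x] by blast
qed

lemma span_eq1: "span2 {v} \<subseteq> {{}, {v}}" using span_sub pow1 by blast
lemma span_eq2: "span2 {v1, v2} \<subseteq> {{}, {v1}, {v2}, {v1, v2}}" using span_sub pow2 by blast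

lemma sub_vadd: "x \<subseteq> V \<Longrightarrow> u \<in> V \<Longrightarrow> vadd x {u} \<subseteq> V" by (auto simp: vadd_def)

lemma L1:
  assumes g: "graph V A" and v: "v \<in> V" and l: "A v v"
  shows "reducible V A {v}"
proof (rule red_intro)
  show "{v} \<subseteq> V" using v by simp
  fix x assume x: "x \<subseteq> V"
  show "\<exists>a. a \<in> span2 {v} \<and> vadd a x \<in> perpE V A {v}"
  proof (cases "bform A x {v}")
    case True
    have "vadd {v} x \<in> perpE V A {v}"
      unfolding perpE_def using span_eq1[of v] flip[OF g, of x v v] True l
        vadd_comm[of "{v}" x] sub_vadd[OF x v] bform_empty by fastforce
    then show ?thesis using span_single[of v "{v}"] by blast
  next
    case False
    have "vadd {} x = x" by (simp add: vadd_def)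
    moreover have "x \<in> perpE V A {v}"
      unfolding perpE_def using span_eq1[of v] False x bform_empty by fastforce
    ultimately show ?thesis using span2.zero by metis
  qed
qed

lemma L3:
  assumes g: "graph V A" and v: "v \<in> V" and iso: "\<forall>u\<in>V. \<not> A v u"
  shows "reducible V A {v}"
proof (rule red_intro)
  show "{v} \<subseteq> V" using v by simp
  fix x assume x: "x \<subseteq> V"
  have N0: "{p. p \<in> x \<and> A p v} = {}" using iso x g unfolding graph_def by blast
  have "\<not> bform A x {v}" by (simp only: bform_single N0) simp
  then have "x \<in> perpE V A {v}"
    unfolding perpE_def using span_eq1[of v] x bform_empty by fastforce
  moreover have "vadd {} x = x" by (simp add: vadd_def)
  ultimately show "\<exists>a. a \<in> span2 {v} \<and> vadd a x \<in> perpE V A {v}" using span2.zero by metis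
qed

lemma L2:
  assumes g: "graph V A" and v1: "v1 \<in> V" and v2: "v2 \<in> V" and ne: "v1 \<noteq> v2"
    and l1: "\<not> A v1 v1" and l2: "\<not> A v2 v2" and e: "A v1 v2"
  shows "reducible V A {v1, v2}"
proof (rule red_intro)
  show "{v1, v2} \<subseteq> V" using v1 v2 by simp
  have e': "A v2 v1" using e g unfolding graph_def by blast
  have s1: "{v1} \<in> span2 {v1, v2}" and s2: "{v2} \<in> span2 {v1, v2}"
    by (auto intro: span_single)
  have s12: "{v1, v2} \<in> span2 {v1, v2}"
    using span2.add[OF s1, of v2] ne by (auto simp: vadd_def insert_commute)
  have perp: "b \<in> perpE V A {v1, v2}" if "b \<subseteq> V" "\<not> bform A b {v1}" "\<not> bform A b {v2}" for b
    unfolding perpE_def using that span_eq2[of v1 v2] bform_empty bform_pair[OF g ne, of b] by fastforce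
  fix x assume x: "x \<subseteq> V"
  have f: "\<And>y u w. bform A (vadd y {u}) {w} \<longleftrightarrow> (bform A y {w} \<noteq> A u w)" using flip[OF g] .
  have x1: "vadd x {v1} \<subseteq> V" and x2: "vadd x {v2} \<subseteq> V" and x12: "vadd (vadd x {v1}) {v2} \<subseteq> V"
    using sub_vadd[OF x v1] sub_vadd[OF x v2] sub_vadd[OF sub_vadd[OF x v1] v2] by auto
  have c1: "vadd {v1} x = vadd x {v1}" and c2: "vadd {v2} x = vadd x {v2}"
    and c12: "vadd {v1, v2} x = vadd (vadd x {v1}) {v2}" using ne by (auto simp: vadd_def)
  show "\<exists>a. a \<in> span2 {v1, v2} \<and> vadd a x \<in> perpE V A {v1, v2}"
  proof (cases "bform A x {v1}"; cases "bform A x {v2}")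
    assume a: "bform A x {v1}" "bform A x {v2}"
    have "vadd {v1, v2} x \<in> perpE V A {v1, v2}"
      unfolding c12 using perp[OF x12] f a l1 l2 e e' by simp
    then show ?thesis using s12 by blast
  next
    assume a: "bform A x {v1}" "\<not> bform A x {v2}"
    have "vadd {v2} x \<in> perpE V A {v1, v2}"
      unfolding c2 using perp[OF x2] f a l1 l2 e e' by simp
    then show ?thesis using s2 by blast
  next
    assume a: "\<not> bform A x {v1}" "bform A x {v2}"
    have "vadd {v1} x \<in> perpE V A {v1, v2}"
      unfolding c1 using perp[OF x1] f a l1 l2 e e' by simp
    then show ?thesis using s1 by blast
  next
    assume a: "\<not> bform A x {v1}" "\<not> bform A x {v2}"
    have "vadd {} x = x" by (simp add: vadd_def)
    moreover have "x \<in> perpE V A {v1, v2}" using perp[OF x] a by simp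
    ultimately show ?thesis using span2.zero by metis
  qed
qed

lemma not_red_single:
  assumes g: "graph V A" and l: "\<not> A v v" and u: "u \<in> V" and e: "A v u"
  shows "\<not> reducible V A {v}"
  using L5[OF g _ _ _ u, of "{v}" v] l e by auto

theorem mainTheorem9:
  fixes V :: "'a set" and A :: "'a \<Rightarrow> 'a \<Rightarrow> bool" and W :: "'a set"
  assumes "graph V A" and "W \<subseteq> V" and "W \<noteq> {}"
  shows "minimally_reducible V A W \<longleftrightarrow>
           ((\<exists>v. W = {v} \<and> A v v)
          \<or> (\<exists>v1 v2. W = {v1, v2} \<and> v1 \<noteq> v2 \<and> \<not> A v1 v1 \<and> \<not> A v2 v2 \<and> A v1 v2)
          \<or> (\<exists>v. W = {v} \<and> \<not> A v v \<and> (\<forall>u \<in> V. \<not> A v u)))"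
proof
  assume m: "minimally_reducible V A W"
  have r: "reducible V A W" and mn: "\<And>W'. W' \<subset> W \<Longrightarrow> W' \<noteq> {} \<Longrightarrow> \<not> reducible V A W'"
    using m unfolding minimally_reducible_def by auto
  show "(\<exists>v. W = {v} \<and> A v v)
          \<or> (\<exists>v1 v2. W = {v1, v2} \<and> v1 \<noteq> v2 \<and> \<not> A v1 v1 \<and> \<not> A v2 v2 \<and> A v1 v2)
          \<or> (\<exists>v. W = {v} \<and> \<not> A v v \<and> (\<forall>u \<in> V. \<not> A v u))"
  proof (cases "\<exists>v\<in>W. A v v")
    case True
    then obtain v where v: "v \<in> W" "A v v" by blast
    have "reducible V A {v}" using L1[OF assms(1) _ v(2)] v assms(2) by auto
    then have "W = {v}" using mn[of "{v}"] v by auto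
    then show ?thesis using v by auto
  next
    case nl: False
    show ?thesis
    proof (cases "\<exists>v1\<in>W. \<exists>v2\<in>W. A v1 v2")
      case True
      then obtain v1 v2 where v: "v1 \<in> W" "v2 \<in> W" "A v1 v2" by blast
      have ne: "v1 \<noteq> v2" using nl v by auto
      have "reducible V A {v1, v2}" using L2[OF assms(1) _ _ ne] v nl assms(2) by auto
      then have "W = {v1, v2}" using mn[of "{v1, v2}"] v by auto
      then show ?thesis using v ne nl by auto
    next
      case False
      then have z: "\<forall>p\<in>W. \<forall>q\<in>W. \<not> A p q" by auto
      obtain v where v: "v \<in> W" using assms(3) by blast
      have iso: "\<forall>u\<in>V. \<not> A v u" using L5[OF assms(1) r z v] by auto
      have "reducible V A {v}" using L3[OF assms(1) _ iso] v assms(2) by auto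
      then have "W = {v}" using mn[of "{v}"] v by auto
      then show ?thesis using v iso z by auto
    qed
  qed
next
  assume h: "(\<exists>v. W = {v} \<and> A v v)
          \<or> (\<exists>v1 v2. W = {v1, v2} \<and> v1 \<noteq> v2 \<and> \<not> A v1 v1 \<and> \<not> A v2 v2 \<and> A v1 v2)
          \<or> (\<exists>v. W = {v} \<and> \<not> A v v \<and> (\<forall>u \<in> V. \<not> A v u))"
  have sing: "\<And>v W'. W' \<subset> {v} \<Longrightarrow> W' \<noteq> {} \<Longrightarrow> False" by auto
  show "minimally_reducible V A W"
    unfolding minimally_reducible_def
  proof (intro conjI allI impI)
    show "W \<noteq> {}" by fact
    show "reducible V A W"
      using h L1[OF assms(1)] L2[OF assms(1)] L3[OF assms(1)] assms(2) by auto
    fix W' assume w': "W' \<subset> W \<and> W' \<noteq> {}"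
    show "\<not> reducible V A W'"
    proof (cases "\<exists>v. W = {v}")
      case True
      then show ?thesis using w' sing by blast
    next
      case False
      then obtain v1 v2 where v: "W = {v1, v2}" "v1 \<noteq> v2" "\<not> A v1 v1" "\<not> A v2 v2" "A v1 v2"
        using h by blast
      have e': "A v2 v1" using v(5) assms(1) unfolding graph_def by auto
      have "W' = {v1} \<or> W' = {v2}" using w' v(1) by auto
      moreover have "\<not> reducible V A {v1}"
        using not_red_single[OF assms(1) v(3) _ v(5)] v(1) assms(2) by auto
      moreover have "\<not> reducible V A {v2}"
        using not_red_single[OF assms(1) v(4) _ e'] v(1) assms(2) by auto
      ultimately show ?thesis by auto
    qed
  qed
qed

end
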